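(* Let $(X_n)_{n\in\mathbb N}$ be a stationary $\mathbb R^d$-valued process which is $\Theta,r$-multiple mixing with respect to $\mathcal G$, and suppose there is $p\in\mathbb N^*$ with $\sum_{i=0}^\infty i^{2p-2}\Theta(i)<\infty$. Then there is a constant $C>0$ such that for all $f\in\mathcal G$ with $\|f\|_\infty\le1$ and all $n\in\mathbb N^*$, $${\rm E}\Big|\sum_{i=1}^n\big(f(X_i)-{\rm E}f(X_0)\big)\Big|^{2p}\le C\sum_{i=1}^p n^i\,\|f(X_0)-{\rm E}f(X_0)\|_r^i\,\|f-{\rm E}f(X_0)\|_{\mathcal G}^i.$$
   Context: $\mathcal G$ is a vector space of measurable real functions on $\mathbb R^d$ containing the constants, with a seminorm $\|\cdot\|_{\mathcal G}$; $\|\cdot\|_r$ is the $L^r$ norm. Multiple mixing: for integers $i_1,\dots,i_j$ write $i_j^*=i_1+\dots+i_j$. $(X_i)$ is $\Theta,r$-multiple mixing with respect to $\mathcal G$ if $r\in[1,\infty)$, $\Theta:\mathbb N\to\mathbb R_0^+$ is nonincreasing, and for every $p\in\mathbb N^*$ there is $K_p<\infty$ such that $$\big|{\rm Cov}\big(f(X_0)f(X_{i_1^*})\cdots f(X_{i_{q-1}^*}),\,f(X_{i_q^*})f(X_{i_{q+1}^*})\cdots f(X_{i_p^*})\big)\big|\le K_p\|f(X_0)\|_r\|f\|_{\mathcal G}\Theta(i_q)$$ for all $f\in\mathcal G$ with $\|f\|_\infty\le1$ and ${\rm E}f(X_0)=0$, all $i_1,\dots,i_p\in\mathbb N$ and all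 $q\in\{1,\dots,p\}$. *)

theory Defs
  imports "HOL-Probability.Probability"
begin

definition seminormed_function_space ::
  "('b::topological_space \<Rightarrow> real) set \<Rightarrow> (('b \<Rightarrow> real) \<Rightarrow> real) \<Rightarrow> bool" where
  "seminormed_function_space G nG \<longleftrightarrow>
     G \<subseteq> borel_measurable borel \<and>
     (\<forall>c::real. (\<lambda>_. c) \<in> G) \<and>
     (\<forall>f\<in>G. \<forall>g\<in>G. (\<lambda>x. f x + g x) \<in> G) \<and>
     (\<forall>f\<in>G. \<forall>c::real. (\<lambda>x. c * f x) \<in> G) \<and>
     (\<forall>f\<in>G. 0 \<le> nG f) \<and>
     (\<forall>f\<in>G. \<forall>g\<in>G. nG (\<lambda>x. f x + g x) \<le> nG f + nG g) \<and>
     (\<forall>f\<in>G. \<forall>c::real. nG (\<lambda>x. c * f x) = \<bar>c\<bar> * nG f)"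

definition Lr_norm :: "'a measure \<Rightarrow> real \<Rightarrow> ('a \<Rightarrow> real) \<Rightarrow> real" where
  "Lr_norm M r Y = (\<integral>\<omega>. \<bar>Y \<omega>\<bar> powr r \<partial>M) powr (1 / r)"

definition cov :: "'a measure \<Rightarrow> ('a \<Rightarrow> real) \<Rightarrow> ('a \<Rightarrow> real) \<Rightarrow> real" where
  "cov M Y Z = (\<integral>\<omega>. Y \<omega> * Z \<omega> \<partial>M) - (\<integral>\<omega>. Y \<omega> \<partial>M) * (\<integral>\<omega>. Z \<omega> \<partial>M)"

definition stationary :: "'a measure \<Rightarrow> (nat \<Rightarrow> 'a \<Rightarrow> 'b::topological_space) \<Rightarrow> bool" where
  "stationary M X \<longleftrightarrow>
     (\<forall>m n. distr M (PiM {..n} (\<lambda>_. borel)) (\<lambda>\<omega>. \<lambda>i\<in>{..n}. X (m + i) \<omega>)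
          = distr M (PiM {..n} (\<lambda>_. borel)) (\<lambda>\<omega>. \<lambda>i\<in>{..n}. X i \<omega>))"

text \<open>The gaps are given by a
  function i :: nat => nat (only i 1, ..., i p matter); the partial sums are
  i_j^* = i 1 + ... + i j, with i_0^* = 0; the sup norm bound is pointwise.\<close>
definition multiple_mixing ::
  "'a measure \<Rightarrow> (nat \<Rightarrow> 'a \<Rightarrow> 'b::topological_space) \<Rightarrow> ('b \<Rightarrow> real) set \<Rightarrow>
   (('b \<Rightarrow> real) \<Rightarrow> real) \<Rightarrow> (nat \<Rightarrow> real) \<Rightarrow> real \<Rightarrow> bool" where
  "multiple_mixing M X G nG \<Theta> r \<longleftrightarrow>
     1 \<le> r \<and> antimono \<Theta> \<and> (\<forall>k. 0 \<le> \<Theta> k) \<and>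
     (\<forall>p::nat. p \<ge> 1 \<longrightarrow> (\<exists>K::real.
        \<forall>f\<in>G. (\<forall>x. \<bar>f x\<bar> \<le> 1) \<longrightarrow> (\<integral>\<omega>. f (X 0 \<omega>) \<partial>M) = 0 \<longrightarrow>
        (\<forall>i::nat \<Rightarrow> nat. \<forall>q\<in>{1..p}.
          \<bar>cov M (\<lambda>\<omega>. \<Prod>j\<in>{0..<q}. f (X (\<Sum>l\<in>{1..j}. i l) \<omega>))
                  (\<lambda>\<omega>. \<Prod>j\<in>{q..p}. f (X (\<Sum>l\<in>{1..j}. i l) \<omega>))\<bar>
          \<le> K * Lr_norm M r (\<lambda>\<omega>. f (X 0 \<omega>)) * nG f * \<Theta> (i q))))"

end

theory Submission imports Defs "HOL-Combinatorics.Permutations" begin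

definition LL :: "nat \<Rightarrow> nat set \<Rightarrow> nat list set" where
  "LL m A = {xs. set xs \<subseteq> A \<and> length xs = m}"

lemma finite_LL: "finite A \<Longrightarrow> finite (LL m A)"
  unfolding LL_def by (rule finite_lists_length_eq)

lemma card_LL: "finite A \<Longrightarrow> card (LL m A) = card A ^ m"
  unfolding LL_def by (rule card_lists_length_eq)

lemma LL_Suc: "LL (Suc m) A = (\<lambda>(x,xs). x # xs) ` (A \<times> LL m A)"
proof
  show "LL (Suc m) A \<subseteq> (\<lambda>(x,xs). x # xs) ` (A \<times> LL m A)"
  proof
    fix xs assume "xs \<in> LL (Suc m) A"
    then obtain y ys where "xs = y # ys" "y \<in> A" "ys \<in> LL m A"
      unfolding LL_def by (cases xs) auto
    then show "xs \<in> (\<lambda>(x,xs). x # xs) ` (A \<times> LL m A)" by force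
  qed
qed (auto simp: LL_def)

lemma sum_power_lists:
  fixes Y :: "nat \<Rightarrow> real"
  assumes "finite A"
  shows "(\<Sum>i\<in>A. Y i) ^ m = (\<Sum>xs\<in>LL m A. prod_list (map Y xs))"
proof (induction m)
  case 0
  have "LL 0 A = {[]}" by (auto simp: LL_def)
  then show ?case by simp
next
  case (Suc m)
  have inj: "inj_on (\<lambda>(x,xs). x # xs) (A \<times> LL m A)" by (auto simp: inj_on_def)
  have "(\<Sum>xs\<in>LL (Suc m) A. prod_list (map Y xs))
      = (\<Sum>z\<in>A \<times> LL m A. prod_list (map Y ((\<lambda>(x,xs). x # xs) z)))"
    unfolding LL_Suc by (rule sum.reindex[OF inj, unfolded comp_def])
  also have "\<dots> = (\<Sum>x\<in>A. \<Sum>xs\<in>LL m A. Y x * prod_list (map Y xs))"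
    by (simp only: sum.cartesian_product) (rule sum.cong, auto)
  also have "\<dots> = (\<Sum>i\<in>A. Y i) * (\<Sum>xs\<in>LL m A. prod_list (map Y xs))"
    by (simp add: sum_product)
  finally show ?case using Suc by simp
qed

definition SL :: "nat \<Rightarrow> nat set \<Rightarrow> nat list set" where
  "SL m A = {xs. sorted xs \<and> set xs \<subseteq> A \<and> length xs = m}"

lemma SL_sub: "SL m A \<subseteq> LL m A" by (auto simp: SL_def LL_def)

lemma finite_SL: "finite A \<Longrightarrow> finite (SL m A)"
  using finite_subset[OF SL_sub finite_LL] by blast

lemma card_mset_fiber: "card {xs. mset xs = mset ys} \<le> fact (length ys)"
proof -
  have "{xs. mset xs = mset ys} \<subseteq> (\<lambda>p. permute_list p ys) ` {p. p permutes {..<length ys}}"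
  proof
    fix xs assume "xs \<in> {xs. mset xs = mset ys}"
    then obtain p where "p permutes {..<length ys}" "permute_list p ys = xs"
      using mset_eq_permutation by blast
    then show "xs \<in> (\<lambda>p. permute_list p ys) ` {p. p permutes {..<length ys}}" by blast
  qed
  then have "card {xs. mset xs = mset ys} \<le> card ((\<lambda>p. permute_list p ys) ` {p. p permutes {..<length ys}})"
    by (rule card_mono[rotated]) (intro finite_imageI finite_permutations, simp)
  also have "\<dots> \<le> card {p. p permutes {..<length ys}}" by (rule card_image_le) (intro finite_permutations, simp)
  also have "\<dots> = fact (length ys)" by (rule card_permutations) simp_all
  finally show ?thesis .
qed

lemma sum_sort_le:
  fixes \<phi> :: "nat list \<Rightarrow> real"
  assumes "finite A" and nn: "\<And>ys. 0 \<le> \<phi> ys"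
  shows "(\<Sum>xs\<in>LL m A. \<phi> (sort xs)) \<le> fact m * (\<Sum>ys\<in>SL m A. \<phi> ys)"
proof -
  have fin: "finite (LL m A)" using assms finite_LL by blast
  have "(\<Sum>xs\<in>LL m A. \<phi> (sort xs)) = (\<Sum>ys\<in>sort ` LL m A. \<Sum>xs\<in>{xs\<in>LL m A. sort xs = ys}. \<phi> (sort xs))"
    by (rule sum.image_gen[OF fin])
  also have "\<dots> = (\<Sum>ys\<in>sort ` LL m A. real (card {xs\<in>LL m A. sort xs = ys}) * \<phi> ys)"
    by (rule sum.cong) simp_all
  also have "\<dots> \<le> (\<Sum>ys\<in>sort ` LL m A. fact m * \<phi> ys)"
  proof (rule sum_mono)
    fix ys assume ys: "ys \<in> sort ` LL m A"
    then obtain x where x: "x \<in> LL m A" "ys = sort x" by blast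
    then have len: "length ys = m" and sA: "set ys \<subseteq> A" by (simp_all add: LL_def)
    have "{xs\<in>LL m A. sort xs = ys} \<subseteq> {xs. mset xs = mset ys}"
    proof
      fix xs assume "xs \<in> {xs\<in>LL m A. sort xs = ys}"
      then have "sort xs = ys" by blast
      then have "mset xs = mset ys" proof -
        have "mset (sort xs) = mset xs" by simp
        then show ?thesis using \<open>sort xs = ys\<close> by simp
      qed
      then show "xs \<in> {xs. mset xs = mset ys}" by simp
    qed
    then have "card {xs\<in>LL m A. sort xs = ys} \<le> card {xs. mset xs = mset ys}"
    proof (rule card_mono[rotated])
      have "{xs. mset xs = mset ys} \<subseteq> LL m A"
      proof
        fix xs assume "xs \<in> {xs. mset xs = mset ys}"
        then have "mset xs = mset ys" by simp
        then have "set xs = set ys" "length xs = length ys"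
          by (rule mset_eq_setD, rule mset_eq_length)
        then show "xs \<in> LL m A" using sA len unfolding LL_def by simp
      qed
      then show "finite {xs. mset xs = mset ys}" by (rule finite_subset[OF _ finite_LL[OF assms(1)]])
    qed
    also have "\<dots> \<le> fact m" using card_mset_fiber[of ys] len by simp
    finally have "real (card {xs\<in>LL m A. sort xs = ys}) \<le> real (fact m)" by (simp only: of_nat_le_iff)
    then have "real (card {xs\<in>LL m A. sort xs = ys}) \<le> fact m" by simp
    then show "real (card {xs\<in>LL m A. sort xs = ys}) * \<phi> ys \<le> fact m * \<phi> ys"
      by (rule mult_right_mono) (rule nn)
  qed
  also have "\<dots> = fact m * (\<Sum>ys\<in>sort ` LL m A. \<phi> ys)" by (simp add: sum_distrib_left)
  also have "\<dots> \<le> fact m * (\<Sum>ys\<in>SL m A. \<phi> ys)"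
  proof (rule mult_left_mono[OF sum_mono2])
    show "sort ` LL m A \<subseteq> SL m A" unfolding SL_def LL_def by auto
  qed (simp_all add: finite_SL assms nn)
  finally show ?thesis .
qed


definition gaps :: "nat list \<Rightarrow> nat list" where
  "gaps ys = map (\<lambda>j. ys ! Suc j - ys ! j) [0..<length ys - 1]"

definition Mx :: "nat list \<Rightarrow> nat" where
  "Mx d = Max (insert 0 (set d))"

lemma length_gaps: "length (gaps ys) = length ys - 1"
  by (simp add: gaps_def)

lemma nth_gaps: "j < length ys - 1 \<Longrightarrow> gaps ys ! j = ys ! Suc j - ys ! j"
  by (simp add: gaps_def)

lemma gaps_inj:
  assumes "sorted ys" "sorted zs" "length ys = length zs" "ys ! 0 = zs ! 0" "gaps ys = gaps zs"
  shows "ys = zs"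
proof (rule nth_equalityI)
  show "length ys = length zs" by fact
  have "j < length ys \<Longrightarrow> ys ! j = zs ! j" for j
  proof (induction j)
    case 0 then show ?case using assms by simp
  next
    case (Suc j)
    then have j: "j < length ys - 1" by simp
    have "ys ! j \<le> ys ! Suc j" using assms(1) Suc.prems by (simp add: sorted_iff_nth_mono)
    moreover have "zs ! j \<le> zs ! Suc j" using assms(2,3) Suc.prems by (simp add: sorted_iff_nth_mono)
    moreover have "ys ! Suc j - ys ! j = zs ! Suc j - zs ! j"
      using nth_gaps[OF j] nth_gaps[of j zs] j assms(3,5) by simp
    moreover have "ys ! j = zs ! j" using Suc by simp
    ultimately show ?case by linarith
  qed
  then show "\<And>j. j < length ys \<Longrightarrow> ys ! j = zs ! j" .
qed

lemma Mx_ge: "x \<in> set d \<Longrightarrow> x \<le> Mx d"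
  unfolding Mx_def by (rule Max_ge) simp_all

lemma Mx_in: "Mx d \<in> insert 0 (set d)"
  unfolding Mx_def by (rule Max_in) simp_all

lemma Mx_mem: assumes "d \<noteq> []" shows "Mx d \<in> set d"
proof (cases "Mx d \<in> set d")
  case False
  then have z: "Mx d = 0" using Mx_in[of d] by simp
  obtain x where "x \<in> set d" using assms by (cases d) auto
  then have "x = 0" using Mx_ge[of x d] z by simp
  then show ?thesis using \<open>x \<in> set d\<close> z by simp
qed simp

lemma card_Mx:
  assumes "k \<ge> 1"
  shows "card {d\<in>LL k {0..N}. Mx d = r} \<le> k * (r+1)^(k-1)"
proof -
  let ?F = "\<lambda>j e. take j e @ r # drop j e"
  have "{d\<in>LL k {0..N}. Mx d = r} \<subseteq> (\<Union>j<k. ?F j ` LL (k-1) {0..r})"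
  proof
    fix d assume "d \<in> {d\<in>LL k {0..N}. Mx d = r}"
    then have d: "set d \<subseteq> {0..N}" "length d = k" "Mx d = r" by (auto simp: LL_def)
    then have "d \<noteq> []" using assms by auto
    then have "r \<in> set d" using Mx_mem d(3) by blast
    then obtain j where j: "j < length d" "d ! j = r" by (auto simp: in_set_conv_nth)
    define e where "e = take j d @ drop (Suc j) d"
    have le: "\<And>x. x \<in> set d \<Longrightarrow> x \<le> r" using Mx_ge d(3) by blast
    have "set e \<subseteq> set d" unfolding e_def using set_take_subset set_drop_subset by fastforce
    then have "set e \<subseteq> {0..r}" using le by auto
    moreover have "length e = k - 1" unfolding e_def using j d(2) by simp
    ultimately have eL: "e \<in> LL (k-1) {0..r}" by (simp add: LL_def)
    have "?F j e = take j d @ d ! j # drop (Suc j) d" unfolding e_def using j by simp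
    also have "\<dots> = d" using id_take_nth_drop[OF j(1)] by simp
    finally show "d \<in> (\<Union>j<k. ?F j ` LL (k-1) {0..r})" using eL j d(2) by force
  qed
  then have "card {d\<in>LL k {0..N}. Mx d = r} \<le> card (\<Union>j<k. ?F j ` LL (k-1) {0..r})"
    by (rule card_mono[rotated]) (intro finite_UN_I finite_lessThan finite_imageI finite_LL finite_atLeastAtMost)
  also have "\<dots> \<le> (\<Sum>j<k. card (?F j ` LL (k-1) {0..r}))" by (rule card_UN_le) simp
  also have "\<dots> \<le> (\<Sum>j<k. card (LL (k-1) {0..r}))"
    by (rule sum_mono) (rule card_image_le, rule finite_LL, simp)
  also have "\<dots> = k * (r+1)^(k-1)" by (simp add: card_LL)
  finally show ?thesis .
qed

lemma sum_Theta_Mx: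
  fixes \<Theta> :: "nat \<Rightarrow> real"
  assumes "k \<ge> 1" and nn: "\<And>i. 0 \<le> \<Theta> i"
  shows "(\<Sum>d\<in>LL k {0..N}. \<Theta> (Mx d)) \<le> real k * (\<Sum>r\<in>{0..N}. (real r + 1)^(k-1) * \<Theta> r)"
proof -
  have img: "Mx ` LL k {0..N} \<subseteq> {0..N}"
  proof
    fix x assume "x \<in> Mx ` LL k {0..N}"
    then obtain d where "d \<in> LL k {0..N}" "x = Mx d" by blast
    then show "x \<in> {0..N}" using Mx_in[of d] by (auto simp: LL_def)
  qed
  have "(\<Sum>d\<in>LL k {0..N}. \<Theta> (Mx d)) = (\<Sum>r\<in>{0..N}. \<Sum>d\<in>{d\<in>LL k {0..N}. Mx d = r}. \<Theta> (Mx d))"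
    by (rule sum.group[symmetric, OF finite_LL _ img]) simp_all
  also have "\<dots> = (\<Sum>r\<in>{0..N}. real (card {d\<in>LL k {0..N}. Mx d = r}) * \<Theta> r)"
    by (rule sum.cong) simp_all
  also have "\<dots> \<le> (\<Sum>r\<in>{0..N}. (real k * (real r + 1)^(k-1)) * \<Theta> r)"
  proof (rule sum_mono)
    fix r
    have "card {d\<in>LL k {0..N}. Mx d = r} \<le> k * (r+1)^(k-1)" by (rule card_Mx[OF assms(1)])
    then have "real (card {d\<in>LL k {0..N}. Mx d = r}) \<le> real (k * (r+1)^(k-1))" by (simp only: of_nat_le_iff)
    then have "real (card {d\<in>LL k {0..N}. Mx d = r}) \<le> real k * (real r + 1)^(k-1)" by (simp add: add.commute)
    then show "real (card {d\<in>LL k {0..N}. Mx d = r}) * \<Theta> r \<le> (real k * (real r + 1)^(k-1)) * \<Theta> r"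
      by (rule mult_right_mono) (rule nn)
  qed
  also have "\<dots> = real k * (\<Sum>r\<in>{0..N}. (real r + 1)^(k-1) * \<Theta> r)"
    by (simp add: sum_distrib_left mult.assoc)
  finally show ?thesis .
qed

lemma sum_Theta_gaps:
  fixes \<Theta> :: "nat \<Rightarrow> real"
  assumes "m \<ge> 2" and nn: "\<And>i. 0 \<le> \<Theta> i"
  shows "(\<Sum>ys\<in>SL m {1..n}. \<Theta> (Mx (gaps ys)))
     \<le> real n * (real (m-1) * (\<Sum>r\<in>{0..n}. (real r + 1)^(m-2) * \<Theta> r))"
proof -
  let ?F = "\<lambda>ys. (ys ! 0, gaps ys)"
  have inj: "inj_on ?F (SL m {1..n})"
  proof (rule inj_onI)
    fix ys zs assume a: "ys \<in> SL m {1..n}" "zs \<in> SL m {1..n}" "?F ys = ?F zs"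
    from a(1) have 1: "sorted ys" "length ys = m" unfolding SL_def by simp_all
    from a(2) have 2: "sorted zs" "length zs = m" unfolding SL_def by simp_all
    from a(3) have 3: "ys ! 0 = zs ! 0" "gaps ys = gaps zs" by simp_all
    show "ys = zs" by (rule gaps_inj[OF 1(1) 2(1)]) (simp_all add: 1 2 3)
  qed
  have img: "?F ` SL m {1..n} \<subseteq> {1..n} \<times> LL (m-1) {0..n}"
  proof
    fix z assume "z \<in> ?F ` SL m {1..n}"
    then obtain ys where ys: "z = ?F ys" "ys \<in> SL m {1..n}" by (rule imageE)
    then have s: "set ys \<subseteq> {1..n}" "length ys = m" unfolding SL_def by simp_all
    have "ys ! 0 \<in> set ys" by (rule nth_mem) (use s assms(1) in simp)
    then have "ys ! 0 \<in> {1..n}" using s(1) by blast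
    moreover have "set (gaps ys) \<subseteq> {0..n}"
    proof
      fix x assume "x \<in> set (gaps ys)"
      then obtain j where j: "j < length ys - 1" "x = ys ! Suc j - ys ! j"
        by (auto simp: gaps_def)
      then have "ys ! Suc j \<in> set ys" by (intro nth_mem) simp
      then have "ys ! Suc j \<in> {1..n}" using s(1) by blast
      then show "x \<in> {0..n}" using j by auto
    qed
    moreover have "length (gaps ys) = m - 1" using s by (simp add: length_gaps)
    ultimately show "z \<in> {1..n} \<times> LL (m-1) {0..n}" unfolding ys(1) LL_def by simp
  qed
  have "(\<Sum>ys\<in>SL m {1..n}. \<Theta> (Mx (gaps ys))) = (\<Sum>z\<in>?F ` SL m {1..n}. \<Theta> (Mx (snd z)))"
    by (subst sum.reindex[OF inj]) (simp add: comp_def)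
  also have "\<dots> \<le> (\<Sum>z\<in>{1..n} \<times> LL (m-1) {0..n}. \<Theta> (Mx (snd z)))"
    by (rule sum_mono2[OF _ img]) (simp_all add: finite_LL nn)
  also have "\<dots> = (\<Sum>x\<in>{1..n}. \<Sum>d\<in>LL (m-1) {0..n}. \<Theta> (Mx d))"
    by (simp only: sum.cartesian_product) (rule sum.cong, auto)
  also have "\<dots> = real n * (\<Sum>d\<in>LL (m-1) {0..n}. \<Theta> (Mx d))"
    by simp
  also have "\<dots> \<le> real n * (real (m-1) * (\<Sum>r\<in>{0..n}. (real r + 1)^(m-1-1) * \<Theta> r))"
    by (rule mult_left_mono[OF sum_Theta_Mx]) (use assms in simp_all)
  finally show ?thesis by (simp add: numeral_2_eq_2)
qed


lemma sum_T_bound: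
  fixes \<Theta> :: "nat \<Rightarrow> real"
  assumes nn: "\<And>i. 0 \<le> \<Theta> i" and sm: "summable (\<lambda>i. real i ^ (2*p-2) * \<Theta> i)"
    and e: "e \<le> 2*p-2"
  shows "(\<Sum>r\<in>{0..N}. (real r + 1)^e * \<Theta> r)
      \<le> \<Theta> 0 + 2^(2*p-2) * (\<Sum>i. real i ^ (2*p-2) * \<Theta> i)"
proof -
  have pt: "(real r + 1)^e * \<Theta> r \<le> 2^(2*p-2) * (real r ^ (2*p-2) * \<Theta> r) + (if r = 0 then \<Theta> 0 else 0)" for r
  proof (cases "r = 0")
    case True
    have "0 \<le> 2^(2*p-2) * (real r ^ (2*p-2) * \<Theta> r)" using nn by simp
    then show ?thesis using True by simp
  next
    case False
    then have r1: "1 \<le> real r" by simp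
    have "(real r + 1)^e \<le> (2 * real r)^e" by (rule power_mono) (use r1 in simp_all)
    also have "\<dots> \<le> (2 * real r)^(2*p-2)" by (rule power_increasing[OF e]) (use r1 in simp)
    also have "\<dots> = 2^(2*p-2) * real r ^ (2*p-2)" by (simp add: power_mult_distrib)
    finally have "(real r + 1)^e * \<Theta> r \<le> (2^(2*p-2) * real r ^ (2*p-2)) * \<Theta> r"
      by (rule mult_right_mono) (rule nn)
    then show ?thesis using False by (simp add: mult.assoc)
  qed
  have "(\<Sum>r\<in>{0..N}. (real r + 1)^e * \<Theta> r)
     \<le> (\<Sum>r\<in>{0..N}. 2^(2*p-2) * (real r ^ (2*p-2) * \<Theta> r) + (if r = 0 then \<Theta> 0 else 0))"
    by (rule sum_mono) (rule pt)
  also have "\<dots> = 2^(2*p-2) * (\<Sum>r\<in>{0..N}. real r ^ (2*p-2) * \<Theta> r) + \<Theta> 0"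
    by (simp add: sum.distrib sum_distrib_left)
  also have "\<dots> \<le> 2^(2*p-2) * (\<Sum>i. real i ^ (2*p-2) * \<Theta> i) + \<Theta> 0"
    by (intro add_right_mono mult_left_mono sum_le_suminf[OF sm]) (simp_all add: nn)
  finally show ?thesis by simp
qed

lemma pow_le_sum:
  fixes b :: real
  assumes "0 \<le> b" "1 \<le> e" "e \<le> k"
  shows "b ^ e \<le> b + b ^ k"
proof (cases "b \<le> 1")
  case True
  have "b ^ e \<le> b ^ 1" by (rule power_decreasing) (use assms True in simp_all)
  moreover have "0 \<le> b ^ k" using assms(1) by simp
  ultimately show ?thesis by simp
next
  case False
  have "b ^ e \<le> b ^ k" by (rule power_increasing) (use assms False in simp_all)
  then show ?thesis using assms by simp
qed


locale mixsetup =
  fixes M :: "'a measure" and X :: "nat \<Rightarrow> 'a \<Rightarrow> 'd::euclidean_space"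
  assumes prob: "prob_space M" and meas: "\<And>n. X n \<in> borel_measurable M"
    and stat: "stationary M X"
begin

definition PP :: "('d \<Rightarrow> real) \<Rightarrow> nat list \<Rightarrow> real" where
  "PP h ys = (\<integral>\<omega>. prod_list (map (\<lambda>i. h (X i \<omega>)) ys) \<partial>M)"

lemma meas_prod:
  fixes h :: "'d \<Rightarrow> real"
  assumes "h \<in> borel_measurable borel"
  shows "(\<lambda>\<omega>. prod_list (map (\<lambda>i. h (X i \<omega>)) ys)) \<in> borel_measurable M"
proof (induction ys)
  case Nil then show ?case by simp
next
  case (Cons a ys)
  have "(\<lambda>\<omega>. h (X a \<omega>)) \<in> borel_measurable M"
    by (rule measurable_compose[OF meas assms])
  then show ?case using Cons by (auto intro!: borel_measurable_times)
qed

lemma bound_prod: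
  fixes h :: "'d \<Rightarrow> real"
  assumes "\<And>x. \<bar>h x\<bar> \<le> 1"
  shows "\<bar>prod_list (map (\<lambda>i. h (X i \<omega>)) ys)\<bar> \<le> 1"
proof (induction ys)
  case Nil then show ?case by simp
next
  case (Cons a ys)
  have "\<bar>h (X a \<omega>) * prod_list (map (\<lambda>i. h (X i \<omega>)) ys)\<bar>
      = \<bar>h (X a \<omega>)\<bar> * \<bar>prod_list (map (\<lambda>i. h (X i \<omega>)) ys)\<bar>" by (simp add: abs_mult)
  also have "\<dots> \<le> 1" by (rule mult_le_one) (use assms Cons in simp_all)
  finally show ?case by simp
qed

lemma integrable_prod:
  fixes h :: "'d \<Rightarrow> real"
  assumes "h \<in> borel_measurable borel" "\<And>x. \<bar>h x\<bar> \<le> 1"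
  shows "integrable M (\<lambda>\<omega>. prod_list (map (\<lambda>i. h (X i \<omega>)) ys))"
proof -
  interpret prob_space M by (rule prob)
  show ?thesis
  proof (rule integrable_const_bound[where B=1])
    show "AE \<omega> in M. norm (prod_list (map (\<lambda>i. h (X i \<omega>)) ys)) \<le> 1"
      unfolding real_norm_def by (rule AE_I2) (rule bound_prod[OF assms(2)])
  qed (rule meas_prod[OF assms(1)])
qed

lemma abs_PP_le:
  fixes h :: "'d \<Rightarrow> real"
  assumes "\<And>x. \<bar>h x\<bar> \<le> 1"
  shows "\<bar>PP h ys\<bar> \<le> 1"
proof -
  interpret prob_space M by (rule prob)
  have "\<bar>PP h ys\<bar> \<le> (\<integral>\<omega>. \<bar>prod_list (map (\<lambda>i. h (X i \<omega>)) ys)\<bar> \<partial>M)"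
    unfolding PP_def by (rule integral_abs_bound)
  also have "\<dots> \<le> (\<integral>\<omega>. 1 \<partial>M)"
  proof (rule integral_mono_AE')
    show "AE \<omega> in M. \<bar>prod_list (map (\<lambda>i. h (X i \<omega>)) ys)\<bar> \<le> 1"
      by (rule AE_I2) (rule bound_prod[OF assms])
  qed simp_all
  also have "\<dots> = 1" by (simp add: prob_space)
  finally show ?thesis .
qed

lemma shift_gen:
  fixes h :: "'d \<Rightarrow> real"
  assumes hm: "h \<in> borel_measurable borel" and zs: "set zs \<subseteq> {..N}"
  shows "(\<integral>\<omega>. prod_list (map (\<lambda>i. h (X (s+i) \<omega>)) zs) \<partial>M)
       = (\<integral>\<omega>. prod_list (map (\<lambda>i. h (X i \<omega>)) zs) \<partial>M)"
proof -
  let ?B = "PiM {..N} (\<lambda>_. borel :: 'd measure)"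
  define F where "F x = prod_list (map (\<lambda>i. h (x i)) zs)" for x :: "nat \<Rightarrow> 'd"
  have Fm0: "(\<lambda>x. prod_list (map (\<lambda>i. h (x i)) ws)) \<in> borel_measurable ?B" if "set ws \<subseteq> {..N}" for ws
    using that
  proof (induction ws)
    case Nil then show ?case by simp
  next
    case (Cons a ws)
    then have "a \<in> {..N}" by simp
    then have "(\<lambda>x. h (x a)) \<in> borel_measurable ?B"
      by (rule measurable_compose[OF measurable_component_singleton[where I="{..N}" and M="\<lambda>_. borel"] hm])
    moreover have "set ws \<subseteq> {..N}" using Cons.prems by simp
    then have "(\<lambda>x. prod_list (map (\<lambda>i. h (x i)) ws)) \<in> borel_measurable ?B"
      by (rule Cons.IH)
    ultimately show ?case by (auto intro!: borel_measurable_times)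
  qed
  have Fm: "F \<in> borel_measurable ?B" if "set zs \<subseteq> {..N}"
    unfolding F_def[abs_def] by (rule Fm0[OF that])
  have m1: "(\<lambda>\<omega>. \<lambda>i\<in>{..N}. X (s + i) \<omega>) \<in> M \<rightarrow>\<^sub>M ?B"
    by (rule measurable_restrict) (rule meas)
  have m2: "(\<lambda>\<omega>. \<lambda>i\<in>{..N}. X i \<omega>) \<in> M \<rightarrow>\<^sub>M ?B"
    by (rule measurable_restrict) (rule meas)
  have e1: "F (\<lambda>i\<in>{..N}. X (s + i) \<omega>) = prod_list (map (\<lambda>i. h (X (s+i) \<omega>)) zs)" for \<omega>
    unfolding F_def using zs by (intro arg_cong[where f=prod_list] map_cong) auto
  have e2: "F (\<lambda>i\<in>{..N}. X i \<omega>) = prod_list (map (\<lambda>i. h (X i \<omega>)) zs)" for \<omega>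
    unfolding F_def using zs by (intro arg_cong[where f=prod_list] map_cong) auto
  have d: "distr M ?B (\<lambda>\<omega>. \<lambda>i\<in>{..N}. X (s + i) \<omega>) = distr M ?B (\<lambda>\<omega>. \<lambda>i\<in>{..N}. X i \<omega>)"
    using stat unfolding stationary_def by blast
  have "(\<integral>\<omega>. prod_list (map (\<lambda>i. h (X (s+i) \<omega>)) zs) \<partial>M) = (\<integral>\<omega>. F (\<lambda>i\<in>{..N}. X (s + i) \<omega>) \<partial>M)"
    by (simp add: e1)
  also have "\<dots> = integral\<^sup>L (distr M ?B (\<lambda>\<omega>. \<lambda>i\<in>{..N}. X (s + i) \<omega>)) F"
    by (rule integral_distr[symmetric, OF m1 Fm[OF zs]])
  also have "\<dots> = integral\<^sup>L (distr M ?B (\<lambda>\<omega>. \<lambda>i\<in>{..N}. X i \<omega>)) F" by (simp only: d)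
  also have "\<dots> = (\<integral>\<omega>. F (\<lambda>i\<in>{..N}. X i \<omega>) \<partial>M)"
    by (rule integral_distr[OF m2 Fm[OF zs]])
  also have "\<dots> = (\<integral>\<omega>. prod_list (map (\<lambda>i. h (X i \<omega>)) zs) \<partial>M)"
    by (simp add: e2)
  finally show ?thesis .
qed

lemma PP_shift:
  fixes h :: "'d \<Rightarrow> real"
  assumes hm: "h \<in> borel_measurable borel" and ge: "\<And>i. i \<in> set ys \<Longrightarrow> s \<le> i"
  shows "PP h ys = PP h (map (\<lambda>i. i - s) ys)"
proof -
  have z: "set (map (\<lambda>i. i - s) ys) \<subseteq> {..Mx ys}" using Mx_ge by fastforce
  have e: "map (\<lambda>i. h (X (s + i) \<omega>)) (map (\<lambda>i. i - s) ys) = map (\<lambda>i. h (X i \<omega>)) ys" for \<omega>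
    using ge by simp
  have "PP h ys = (\<integral>\<omega>. prod_list (map (\<lambda>i. h (X (s + i) \<omega>)) (map (\<lambda>i. i - s) ys)) \<partial>M)"
    unfolding PP_def e by simp
  also have "\<dots> = PP h (map (\<lambda>i. i - s) ys)"
    unfolding PP_def by (rule shift_gen[OF hm z])
  finally show ?thesis .
qed


lemma telescope:
  fixes zs :: "nat list"
  assumes "sorted zs" "j < length zs"
  shows "(\<Sum>l\<in>{1..j}. zs ! l - zs ! (l - 1)) = zs ! j - zs ! 0"
  using assms(2)
proof (induction j)
  case 0 then show ?case by simp
next
  case (Suc j)
  have a: "zs ! 0 \<le> zs ! j" "zs ! j \<le> zs ! Suc j"
    using assms(1) Suc.prems by (simp_all add: sorted_iff_nth_mono)
  have "(\<Sum>l\<in>{1..Suc j}. zs ! l - zs ! (l - 1)) = (\<Sum>l\<in>{1..j}. zs ! l - zs ! (l - 1)) + (zs ! Suc j - zs ! j)"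
    by (simp add: sum.cl_ivl_Suc)
  also have "\<dots> = (zs ! j - zs ! 0) + (zs ! Suc j - zs ! j)" using Suc by simp
  also have "\<dots> = zs ! Suc j - zs ! 0" using a by simp
  finally show ?case .
qed

lemma prod_take_nth:
  fixes f :: "nat \<Rightarrow> real"
  assumes "q \<le> length zs"
  shows "prod_list (map f (take q zs)) = (\<Prod>j\<in>{0..<q}. f (zs ! j))"
  unfolding prod.list_conv_set_nth using assms by (intro prod.cong) simp_all

lemma prod_drop_nth:
  fixes f :: "nat \<Rightarrow> real"
  assumes "q \<le> length zs"
  shows "prod_list (map f (drop q zs)) = (\<Prod>j\<in>{q..<length zs}. f (zs ! j))"
proof -
  have "prod_list (map f (drop q zs)) = (\<Prod>j\<in>{0..<length zs - q}. f (zs ! (q + j)))"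
    unfolding prod.list_conv_set_nth using assms by (intro prod.cong) simp_all
  also have "\<dots> = (\<Prod>j\<in>{q..<length zs}. f (zs ! j))"
    by (subst prod.atLeastLessThan_shift_0) (simp add: comp_def)
  finally show ?thesis .
qed

lemma sorted_ge0:
  assumes "sorted ys" "i \<in> set ys"
  shows "ys ! 0 \<le> i"
proof -
  obtain k where "k < length ys" "i = ys ! k" using assms(2) by (auto simp: in_set_conv_nth)
  then show ?thesis using assms(1) by (simp add: sorted_iff_nth_mono)
qed

lemma mix_list:
  fixes h :: "'d \<Rightarrow> real" and \<Theta> :: "nat \<Rightarrow> real"
  assumes Kp: "\<And>i q. q \<in> {1..length ys - 1} \<Longrightarrow>
      \<bar>cov M (\<lambda>\<omega>. \<Prod>j\<in>{0..<q}. h (X (\<Sum>l\<in>{1..j}. i l) \<omega>))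
              (\<lambda>\<omega>. \<Prod>j\<in>{q..length ys - 1}. h (X (\<Sum>l\<in>{1..j}. i l) \<omega>))\<bar> \<le> B * \<Theta> (i q)"
    and hm: "h \<in> borel_measurable borel"
    and ys: "sorted ys" "2 \<le> length ys" and q: "1 \<le> q" "q < length ys"
  shows "\<bar>PP h ys - PP h (take q ys) * PP h (drop q ys)\<bar> \<le> B * \<Theta> (ys ! q - ys ! (q - 1))"
proof -
  define m where "m = length ys"
  define s where "s = ys ! 0"
  define zs where "zs = map (\<lambda>i. i - s) ys"
  define ii where "ii l = zs ! l - zs ! (l - 1)" for l
  have ge: "\<And>i. i \<in> set ys \<Longrightarrow> s \<le> i" unfolding s_def using sorted_ge0[OF ys(1)] by blast
  have lz: "length zs = m" unfolding zs_def m_def by simp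
  have nz: "j < m \<Longrightarrow> zs ! j = ys ! j - s" for j unfolding zs_def m_def by simp
  have szs: "sorted zs" unfolding sorted_iff_nth_mono lz
  proof (intro allI impI)
    fix i j assume "i \<le> j" "j < m"
    then have "ys ! i \<le> ys ! j" using ys(1) unfolding m_def by (simp add: sorted_iff_nth_mono)
    then show "zs ! i \<le> zs ! j" using nz \<open>i \<le> j\<close> \<open>j < m\<close> by simp
  qed
  have "0 < m" using ys(2) unfolding m_def by (cases ys) simp_all
  then have z0: "zs ! 0 = 0" using nz[of 0] unfolding s_def by simp
  have sums: "(\<Sum>l\<in>{1..j}. ii l) = zs ! j" if "j < m" for j
    unfolding ii_def using telescope[OF szs, of j] that lz z0 by simp
  let ?f = "\<lambda>\<omega> i. h (X i \<omega>)"
  have F: "(\<Prod>j\<in>{0..<q}. h (X (\<Sum>l\<in>{1..j}. ii l) \<omega>)) = prod_list (map (?f \<omega>) (take q zs))" for \<omega>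
  proof -
    have "(\<Prod>j\<in>{0..<q}. h (X (\<Sum>l\<in>{1..j}. ii l) \<omega>)) = (\<Prod>j\<in>{0..<q}. ?f \<omega> (zs ! j))"
      using sums q unfolding m_def by (intro prod.cong) simp_all
    also have "\<dots> = prod_list (map (?f \<omega>) (take q zs))"
      by (rule prod_take_nth[symmetric]) (use q lz m_def in simp)
    finally show ?thesis .
  qed
  have iv: "{q..length ys - 1} = {q..<m}" unfolding m_def using q by auto
  have S: "(\<Prod>j\<in>{q..length ys - 1}. h (X (\<Sum>l\<in>{1..j}. ii l) \<omega>)) = prod_list (map (?f \<omega>) (drop q zs))" for \<omega>
  proof -
    have "(\<Prod>j\<in>{q..length ys - 1}. h (X (\<Sum>l\<in>{1..j}. ii l) \<omega>)) = (\<Prod>j\<in>{q..<m}. ?f \<omega> (zs ! j))"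
      unfolding iv using sums by (intro prod.cong) simp_all
    also have "\<dots> = prod_list (map (?f \<omega>) (drop q zs))"
      using prod_drop_nth[of q zs "?f \<omega>"] q lz unfolding m_def by simp
    finally show ?thesis .
  qed
  have FS: "prod_list (map (?f \<omega>) (take q zs)) * prod_list (map (?f \<omega>) (drop q zs)) = prod_list (map (?f \<omega>) zs)" for \<omega>
    by (metis append_take_drop_id map_append prod_list.append)
  have "q \<in> {1..length ys - 1}" using q by simp
  from Kp[OF this, of ii]
  have "\<bar>PP h zs - PP h (take q zs) * PP h (drop q zs)\<bar> \<le> B * \<Theta> (ii q)"
    unfolding cov_def F S FS PP_def .
  moreover have "PP h zs = PP h ys" unfolding zs_def by (rule PP_shift[OF hm ge, symmetric])
  moreover have "PP h (take q zs) = PP h (take q ys)"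
    unfolding zs_def take_map using ge by (intro PP_shift[OF hm, symmetric]) (meson in_set_takeD)
  moreover have "PP h (drop q zs) = PP h (drop q ys)"
    unfolding zs_def drop_map using ge by (intro PP_shift[OF hm, symmetric]) (meson in_set_dropD)
  moreover have "ii q = ys ! q - ys ! (q - 1)"
  proof -
    have "ys ! (q-1) \<le> ys ! q" using ys(1) q by (simp add: sorted_iff_nth_mono)
    moreover have "s \<le> ys ! (q - 1)" using ge q by simp
    ultimately show ?thesis unfolding ii_def using nz[of q] nz[of "q-1"] q unfolding m_def by simp
  qed
  ultimately show ?thesis by simp
qed


definition AA :: "('d \<Rightarrow> real) \<Rightarrow> nat \<Rightarrow> nat \<Rightarrow> real" where
  "AA h n m = (\<Sum>ys\<in>SL m {1..n}. \<bar>PP h ys\<bar>)"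

lemma AA_nonneg: "0 \<le> AA h n m"
  unfolding AA_def by (rule sum_nonneg) simp

lemma AA_1:
  fixes h :: "'d \<Rightarrow> real"
  assumes hm: "h \<in> borel_measurable borel" and c: "(\<integral>\<omega>. h (X 0 \<omega>) \<partial>M) = 0"
  shows "AA h n 1 = 0"
  unfolding AA_def
proof (rule sum.neutral, rule ballI)
  fix ys assume "ys \<in> SL 1 {1..n}"
  then obtain i where ys: "ys = [i]" unfolding SL_def by (auto simp: length_Suc_conv)
  have "PP h [i] = PP h (map (\<lambda>j. j - i) [i])" by (rule PP_shift[OF hm]) simp
  also have "\<dots> = 0" using c unfolding PP_def by simp
  finally show "\<bar>PP h ys\<bar> = 0" using ys by simp
qed

lemma point_bound:
  fixes h :: "'d \<Rightarrow> real" and \<Theta> :: "nat \<Rightarrow> real"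
  assumes Kp: "\<And>i q. q \<in> {1..m - 1} \<Longrightarrow>
      \<bar>cov M (\<lambda>\<omega>. \<Prod>j\<in>{0..<q}. h (X (\<Sum>l\<in>{1..j}. i l) \<omega>))
              (\<lambda>\<omega>. \<Prod>j\<in>{q..m - 1}. h (X (\<Sum>l\<in>{1..j}. i l) \<omega>))\<bar> \<le> B * \<Theta> (i q)"
    and hm: "h \<in> borel_measurable borel" and m: "2 \<le> m" and ys: "ys \<in> SL m {1..n}"
  shows "\<bar>PP h ys\<bar> \<le> B * \<Theta> (Mx (gaps ys)) + (\<Sum>q\<in>{1..<m}. \<bar>PP h (take q ys)\<bar> * \<bar>PP h (drop q ys)\<bar>)"
proof -
  have s: "sorted ys" "length ys = m" using ys unfolding SL_def by simp_all
  have "gaps ys \<noteq> []" using s m by (simp add: gaps_def)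
  then have "Mx (gaps ys) \<in> set (gaps ys)" by (rule Mx_mem)
  then obtain j where j: "j < m - 1" "gaps ys ! j = Mx (gaps ys)"
    using s by (auto simp: in_set_conv_nth length_gaps)
  define q where "q = Suc j"
  have q: "1 \<le> q" "q < m" using j m unfolding q_def by simp_all
  have g: "ys ! q - ys ! (q - 1) = Mx (gaps ys)" using j s nth_gaps[of j ys] unfolding q_def by simp
  have "\<bar>PP h ys - PP h (take q ys) * PP h (drop q ys)\<bar> \<le> B * \<Theta> (ys ! q - ys ! (q - 1))"
    by (rule mix_list[OF _ hm s(1)]) (use Kp s m q in simp_all)
  then have 1: "\<bar>PP h ys - PP h (take q ys) * PP h (drop q ys)\<bar> \<le> B * \<Theta> (Mx (gaps ys))" using g by simp
  have 2: "\<bar>PP h (take q ys)\<bar> * \<bar>PP h (drop q ys)\<bar> \<le> (\<Sum>q\<in>{1..<m}. \<bar>PP h (take q ys)\<bar> * \<bar>PP h (drop q ys)\<bar>)"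
    by (rule member_le_sum) (use q in simp_all)
  have "\<bar>PP h ys\<bar> \<le> \<bar>PP h ys - PP h (take q ys) * PP h (drop q ys)\<bar> + \<bar>PP h (take q ys)\<bar> * \<bar>PP h (drop q ys)\<bar>"
  proof -
    have t: "\<bar>a\<bar> \<le> \<bar>a - b\<bar> + \<bar>b\<bar>" for a b :: real by arith
    show ?thesis using t[of "PP h ys" "PP h (take q ys) * PP h (drop q ys)"] by (simp add: abs_mult)
  qed
  then show ?thesis using 1 2 by linarith
qed

lemma pair_sum_le:
  fixes h :: "'d \<Rightarrow> real"
  assumes q: "q \<le> m"
  shows "(\<Sum>ys\<in>SL m {1..n}. \<bar>PP h (take q ys)\<bar> * \<bar>PP h (drop q ys)\<bar>) \<le> AA h n q * AA h n (m - q)"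
proof -
  let ?F = "\<lambda>ys. (take q ys, drop q ys)"
  have inj: "inj_on ?F (SL m {1..n})"
  proof (rule inj_onI)
    fix xs ys assume "?F xs = ?F ys"
    then have "take q xs @ drop q xs = take q ys @ drop q ys" by simp
    then show "xs = ys" by simp
  qed
  have img: "?F ` SL m {1..n} \<subseteq> SL q {1..n} \<times> SL (m - q) {1..n}"
  proof
    fix z assume "z \<in> ?F ` SL m {1..n}"
    then obtain ys where ys: "z = ?F ys" "ys \<in> SL m {1..n}" by (rule imageE)
    then have s: "sorted ys" "set ys \<subseteq> {1..n}" "length ys = m" unfolding SL_def by simp_all
    have "take q ys \<in> SL q {1..n}" unfolding SL_def using s q
      using sorted_wrt_take[of "(\<le>)" ys q] set_take_subset[of q ys] by auto
    moreover have "drop q ys \<in> SL (m - q) {1..n}" unfolding SL_def using s q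
      using sorted_wrt_drop[of "(\<le>)" ys q] set_drop_subset[of q ys] by auto
    ultimately show "z \<in> SL q {1..n} \<times> SL (m - q) {1..n}" using ys(1) by simp
  qed
  have "(\<Sum>ys\<in>SL m {1..n}. \<bar>PP h (take q ys)\<bar> * \<bar>PP h (drop q ys)\<bar>)
      = (\<Sum>z\<in>?F ` SL m {1..n}. \<bar>PP h (fst z)\<bar> * \<bar>PP h (snd z)\<bar>)"
    by (subst sum.reindex[OF inj]) (simp add: comp_def)
  also have "\<dots> \<le> (\<Sum>z\<in>SL q {1..n} \<times> SL (m - q) {1..n}. \<bar>PP h (fst z)\<bar> * \<bar>PP h (snd z)\<bar>)"
    by (rule sum_mono2[OF _ img]) (simp_all add: finite_SL)
  also have "\<dots> = (\<Sum>a\<in>SL q {1..n}. \<Sum>b\<in>SL (m - q) {1..n}. \<bar>PP h a\<bar> * \<bar>PP h b\<bar>)"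
    by (simp only: sum.cartesian_product) (rule sum.cong, auto)
  also have "\<dots> = AA h n q * AA h n (m - q)"
    unfolding AA_def by (simp add: sum_product)
  finally show ?thesis .
qed

lemma AA_rec:
  fixes h :: "'d \<Rightarrow> real" and \<Theta> :: "nat \<Rightarrow> real"
  assumes Kp: "\<And>i q. q \<in> {1..m - 1} \<Longrightarrow>
      \<bar>cov M (\<lambda>\<omega>. \<Prod>j\<in>{0..<q}. h (X (\<Sum>l\<in>{1..j}. i l) \<omega>))
              (\<lambda>\<omega>. \<Prod>j\<in>{q..m - 1}. h (X (\<Sum>l\<in>{1..j}. i l) \<omega>))\<bar> \<le> B * \<Theta> (i q)"
    and hm: "h \<in> borel_measurable borel" and m: "2 \<le> m" and B: "0 \<le> B" and nn: "\<And>i. 0 \<le> \<Theta> i"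
  shows "AA h n m \<le> B * (real n * (real (m-1) * (\<Sum>r\<in>{0..n}. (real r + 1)^(m-2) * \<Theta> r)))
           + (\<Sum>q\<in>{1..<m}. AA h n q * AA h n (m - q))"
proof -
  have "AA h n m \<le> (\<Sum>ys\<in>SL m {1..n}. B * \<Theta> (Mx (gaps ys)) + (\<Sum>q\<in>{1..<m}. \<bar>PP h (take q ys)\<bar> * \<bar>PP h (drop q ys)\<bar>))"
    unfolding AA_def by (rule sum_mono) (rule point_bound[OF Kp hm m])
  also have "\<dots> = B * (\<Sum>ys\<in>SL m {1..n}. \<Theta> (Mx (gaps ys)))
      + (\<Sum>q\<in>{1..<m}. \<Sum>ys\<in>SL m {1..n}. \<bar>PP h (take q ys)\<bar> * \<bar>PP h (drop q ys)\<bar>)"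
    by (simp only: sum.distrib sum_distrib_left sum.swap[of _ "SL m {1..n}"])
  also have "\<dots> \<le> B * (real n * (real (m-1) * (\<Sum>r\<in>{0..n}. (real r + 1)^(m-2) * \<Theta> r)))
      + (\<Sum>q\<in>{1..<m}. AA h n q * AA h n (m - q))"
    by (intro add_mono mult_left_mono sum_Theta_gaps sum_mono pair_sum_le) (use m B nn in simp_all)
  finally show ?thesis .
qed

end


lemma prod_bound4:
  fixes b x y Dq Dr :: real
  assumes b: "0 \<le> b" and x: "0 \<le> x" "x \<le> Dq * (b + b ^ i)" and y: "0 \<le> y" "y \<le> Dr * (b + b ^ j)"
    and i: "1 \<le> i" and j: "1 \<le> j" and k: "i + j \<le> k" and D: "0 \<le> Dq" "0 \<le> Dr"
  shows "x * y \<le> 4 * (Dq * Dr) * (b + b ^ k)"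
proof -
  have Dq: "0 \<le> Dq * (b + b ^ i)" using x by linarith
  have "x * y \<le> (Dq * (b + b ^ i)) * (Dr * (b + b ^ j))"
    by (rule mult_mono) (use x y Dq in simp_all)
  also have "\<dots> = (Dq * Dr) * (b * b + b ^ (j+1) + b ^ (i+1) + b ^ (i + j))"
    by (simp add: algebra_simps power_add)
  also have "\<dots> \<le> (Dq * Dr) * (4 * (b + b ^ k))"
  proof (rule mult_left_mono)
    have "b * b = b ^ 2" by (simp add: power2_eq_square)
    then have "b * b \<le> b + b ^ k" using pow_le_sum[OF b, of 2 k] i j k by simp
    moreover have "b ^ (j+1) \<le> b + b ^ k" by (rule pow_le_sum) (use b i j k in simp_all)
    moreover have "b ^ (i+1) \<le> b + b ^ k" by (rule pow_le_sum) (use b i j k in simp_all)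
    moreover have "b ^ (i+j) \<le> b + b ^ k" by (rule pow_le_sum) (use b i j k in simp_all)
    ultimately have "b * b + b ^ (j+1) + b ^ (i+1) + b ^ (i + j) \<le> (b + b ^ k) + (b + b ^ k) + (b + b ^ k) + (b + b ^ k)"
      by (intro add_mono)
    then show "b * b + b ^ (j+1) + b ^ (i+1) + b ^ (i + j) \<le> 4 * (b + b ^ k)" by simp
    show "0 \<le> Dq * Dr" using D by simp
  qed
  also have "\<dots> = 4 * (Dq * Dr) * (b + b ^ k)" by (simp only: mult.assoc mult.left_commute[of "Dq * Dr" 4])
  finally show ?thesis .
qed

lemma abstract_bound:
  fixes A :: "'h \<Rightarrow> nat \<Rightarrow> nat \<Rightarrow> real" and b :: "'h \<Rightarrow> nat \<Rightarrow> real"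
  assumes rec: "\<And>m h n. 2 \<le> m \<Longrightarrow> m \<le> P \<Longrightarrow> h \<in> H \<Longrightarrow>
        A h n m \<le> c * b h n + (\<Sum>q\<in>{1..<m}. A h n q * A h n (m - q))"
    and A1: "\<And>h n. h \<in> H \<Longrightarrow> A h n 1 = 0"
    and nonneg: "\<And>h n m. 0 \<le> A h n m" and bn: "\<And>h n. h \<in> H \<Longrightarrow> 0 \<le> b h n" and c: "0 \<le> c"
  shows "1 \<le> m \<Longrightarrow> m \<le> P \<Longrightarrow> \<exists>D\<ge>0. \<forall>h\<in>H. \<forall>n. A h n m \<le> D * (b h n + b h n ^ (m div 2))"
proof (induction m rule: less_induct)
  case (less m)
  show ?case
  proof (cases "m = 1")
    case True
    then show ?thesis using A1 by (intro exI[of _ 0]) simp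
  next
    case False
    then have m2: "2 \<le> m" using less.prems by simp
    have "\<forall>q\<in>{1..<m}. \<exists>D\<ge>0. \<forall>h\<in>H. \<forall>n. A h n q \<le> D * (b h n + b h n ^ (q div 2))"
      using less.IH less.prems by simp
    then obtain Df where Df: "\<And>q. q \<in> {1..<m} \<Longrightarrow> 0 \<le> Df q \<and> (\<forall>h\<in>H. \<forall>n. A h n q \<le> Df q * (b h n + b h n ^ (q div 2)))"
      by metis
    define D where "D = c + (\<Sum>q\<in>{1..<m}. 4 * (Df q * Df (m - q)))"
    have DD: "0 \<le> Df q * Df (m - q)" if q: "q \<in> {1..<m}" for q
    proof -
      have "m - q \<in> {1..<m}" using q by auto
      then show ?thesis using Df[OF q] Df[of "m - q"] by simp
    qed
    have D0: "0 \<le> D" unfolding D_def using c DD by (intro add_nonneg_nonneg sum_nonneg) simp_all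
    have "\<forall>h\<in>H. \<forall>n. A h n m \<le> D * (b h n + b h n ^ (m div 2))"
    proof (intro ballI allI)
      fix h n assume h: "h \<in> H"
      let ?b = "b h n" and ?k = "m div 2"
      have bk: "0 \<le> ?b + ?b ^ ?k" using bn[OF h, of n] by simp
      have trm: "A h n q * A h n (m - q) \<le> 4 * (Df q * Df (m - q)) * (?b + ?b ^ ?k)"
        if q: "q \<in> {1..<m}" for q
      proof (cases "q = 1 \<or> m - q = 1")
        case True
        then have "A h n q * A h n (m - q) = 0" using A1[OF h] by auto
        moreover have "0 \<le> 4 * (Df q * Df (m - q)) * (?b + ?b ^ ?k)"
          using DD[OF q] bk by simp
        ultimately show ?thesis by linarith
      next
        case False
        have q2: "m - q \<in> {1..<m}" using q by auto
        show ?thesis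
        proof (rule prod_bound4[OF bn[OF h]])
          show "A h n q \<le> Df q * (?b + ?b ^ (q div 2))" using Df[OF q] h by blast
          show "A h n (m - q) \<le> Df (m - q) * (?b + ?b ^ ((m - q) div 2))" using Df[OF q2] h by blast
          show "1 \<le> q div 2" using False q by auto
          show "1 \<le> (m - q) div 2" using False q by auto
          show "q div 2 + (m - q) div 2 \<le> m div 2" using q by auto
          show "0 \<le> Df q" "0 \<le> Df (m - q)" using Df[OF q] Df[OF q2] by simp_all
        qed (simp_all add: nonneg)
      qed
      have "A h n m \<le> c * ?b + (\<Sum>q\<in>{1..<m}. A h n q * A h n (m - q))"
        by (rule rec[OF m2 less.prems(2) h])
      also have "\<dots> \<le> c * (?b + ?b ^ ?k) + (\<Sum>q\<in>{1..<m}. 4 * (Df q * Df (m - q)) * (?b + ?b ^ ?k))"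
        by (intro add_mono mult_left_mono sum_mono trm) (use c bn[OF h, of n] in simp_all)
      also have "\<dots> = D * (?b + ?b ^ ?k)"
        unfolding D_def by (simp add: distrib_right sum_distrib_right)
      finally show "A h n m \<le> D * (?b + ?b ^ ?k)" .
    qed
    then show ?thesis using D0 by blast
  qed
qed


lemma Lr_scale:
  assumes "0 < r"
  shows "Lr_norm M r (\<lambda>\<omega>. 2 * Y \<omega>) = 2 * Lr_norm M r Y"
proof -
  have e: "(\<lambda>\<omega>. \<bar>2 * Y \<omega>\<bar> powr r) = (\<lambda>\<omega>. 2 powr r * \<bar>Y \<omega>\<bar> powr r)"
    by (simp add: abs_mult powr_mult)
  have I: "0 \<le> (\<integral>\<omega>. \<bar>Y \<omega>\<bar> powr r \<partial>M)" by (rule integral_nonneg_AE) simp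
  have "Lr_norm M r (\<lambda>\<omega>. 2 * Y \<omega>) = (2 powr r * (\<integral>\<omega>. \<bar>Y \<omega>\<bar> powr r \<partial>M)) powr (1 / r)"
    unfolding Lr_norm_def e by simp
  also have "\<dots> = (2 powr r) powr (1 / r) * (\<integral>\<omega>. \<bar>Y \<omega>\<bar> powr r \<partial>M) powr (1 / r)"
    by (rule powr_mult)
  also have "(2 powr r) powr (1 / r) = (2::real)" using assms by (simp add: powr_powr)
  finally show ?thesis unfolding Lr_norm_def by simp
qed

lemma sum_pow_ge:
  fixes b :: real
  assumes "0 \<le> b" "1 \<le> p"
  shows "b + b ^ p \<le> (\<Sum>i\<in>{1..p}. (4 * b) ^ i)"
proof (cases "p = 1")
  case True then show ?thesis using assms by simp
next
  case False
  have "b + b ^ p \<le> 4 * b + (4 * b) ^ p"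
  proof (rule add_mono)
    show "b \<le> 4 * b" using assms by simp
    have "b ^ p \<le> 4 ^ p * b ^ p"
    proof -
      have "1 \<le> (4::real) ^ p" by simp
      then show ?thesis using mult_right_mono[of 1 "4 ^ p" "b ^ p"] assms by simp
    qed
    then show "b ^ p \<le> (4 * b) ^ p" by (simp add: power_mult_distrib)
  qed
  also have "\<dots> = (\<Sum>i\<in>{1, p}. (4 * b) ^ i)" using False by simp
  also have "\<dots> \<le> (\<Sum>i\<in>{1..p}. (4 * b) ^ i)"
    by (rule sum_mono2) (use assms in auto)
  finally show ?thesis .
qed


theorem proposition1:
  fixes M :: "'a measure" and X :: "nat \<Rightarrow> 'a \<Rightarrow> 'd::euclidean_space"
    and G :: "('d \<Rightarrow> real) set" and nG :: "('d \<Rightarrow> real) \<Rightarrow> real"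
    and \<Theta> :: "nat \<Rightarrow> real" and r :: real and p :: nat
  assumes "prob_space M"
    and "\<And>n. X n \<in> borel_measurable M"
    and "seminormed_function_space G nG"
    and "stationary M X"
    and "multiple_mixing M X G nG \<Theta> r"
    and "p \<ge> 1"
    and "summable (\<lambda>i. real i ^ (2 * p - 2) * \<Theta> i)"
  shows "\<exists>C>0. \<forall>f\<in>G. (\<forall>x. \<bar>f x\<bar> \<le> 1) \<longrightarrow> (\<forall>n::nat. n \<ge> 1 \<longrightarrow>
           (\<integral>\<omega>. \<bar>\<Sum>i\<in>{1..n}. f (X i \<omega>) - (\<integral>\<omega>'. f (X 0 \<omega>') \<partial>M)\<bar> ^ (2 * p) \<partial>M)
           \<le> C * (\<Sum>i\<in>{1..p}. real n ^ i
                 * Lr_norm M r (\<lambda>\<omega>. f (X 0 \<omega>) - (\<integral>\<omega>'. f (X 0 \<omega>') \<partial>M)) ^ i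
                 * nG (\<lambda>x. f x - (\<integral>\<omega>'. f (X 0 \<omega>') \<partial>M)) ^ i))"
proof -
  interpret ms: mixsetup M X by (rule mixsetup.intro[OF assms(1) assms(2) assms(4)])
  interpret prob_space M by (rule assms(1))
  note SG = assms(3)[unfolded seminormed_function_space_def]
  have Gm: "\<And>f. f \<in> G \<Longrightarrow> f \<in> borel_measurable borel" using SG by blast
  have Gc: "\<And>c. (\<lambda>_. c) \<in> G" using SG by blast
  have Ga: "\<And>f g. f \<in> G \<Longrightarrow> g \<in> G \<Longrightarrow> (\<lambda>x. f x + g x) \<in> G" using SG by blast
  have Gs: "\<And>f c. f \<in> G \<Longrightarrow> (\<lambda>x. c * f x) \<in> G" using SG by blast
  have Gn: "\<And>f. f \<in> G \<Longrightarrow> 0 \<le> nG f" using SG by blast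
  have Gh: "\<And>f c. f \<in> G \<Longrightarrow> nG (\<lambda>x. c * f x) = \<bar>c\<bar> * nG f" using SG by blast
  note MX = assms(5)[unfolded multiple_mixing_def]
  have r1: "1 \<le> r" using MX by blast
  have nnT: "\<And>k. 0 \<le> \<Theta> k" using MX by blast
  define Q where "Q p' K \<longleftrightarrow> (\<forall>f\<in>G. (\<forall>x. \<bar>f x\<bar> \<le> 1) \<longrightarrow> (\<integral>\<omega>. f (X 0 \<omega>) \<partial>M) = 0 \<longrightarrow>
        (\<forall>i::nat \<Rightarrow> nat. \<forall>q\<in>{1..p'}.
          \<bar>cov M (\<lambda>\<omega>. \<Prod>j\<in>{0..<q}. f (X (\<Sum>l\<in>{1..j}. i l) \<omega>))
                  (\<lambda>\<omega>. \<Prod>j\<in>{q..p'}. f (X (\<Sum>l\<in>{1..j}. i l) \<omega>))\<bar>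
          \<le> K * Lr_norm M r (\<lambda>\<omega>. f (X 0 \<omega>)) * nG f * \<Theta> (i q)))" for p' :: nat and K :: real
  have "\<forall>p'::nat. p' \<ge> 1 \<longrightarrow> (\<exists>K. Q p' K)" using MX unfolding Q_def by blast
  then have "\<forall>p'. \<exists>K. p' \<ge> 1 \<longrightarrow> Q p' K" by blast
  then obtain Kf where Kf: "\<And>p'. p' \<ge> 1 \<Longrightarrow> Q p' (Kf p')" by metis
  define Kb where "Kb = (\<Sum>p'\<in>{1..2*p}. \<bar>Kf p'\<bar>)"
  have Kb0: "0 \<le> Kb" unfolding Kb_def by (rule sum_nonneg) simp
  have KbK: "Kf p' \<le> Kb" if "p' \<in> {1..2*p}" for p'
  proof -
    have "\<bar>Kf p'\<bar> \<le> Kb" unfolding Kb_def by (rule member_le_sum) (use that in simp_all)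
    then show ?thesis by simp
  qed
  define T where "T = \<Theta> 0 + 2^(2*p-2) * (\<Sum>i. real i ^ (2*p-2) * \<Theta> i)"
  have T0: "0 \<le> T" unfolding T_def
    by (intro add_nonneg_nonneg mult_nonneg_nonneg suminf_nonneg assms(7)) (simp_all add: nnT)
  define c where "c = Kb * (2 * p) * T"
  have c0: "0 \<le> c" unfolding c_def using Kb0 T0 by simp
  define H where "H = {h\<in>G. (\<forall>x. \<bar>h x\<bar> \<le> 1) \<and> (\<integral>\<omega>. h (X 0 \<omega>) \<partial>M) = 0}"
  define a where "a h = Lr_norm M r (\<lambda>\<omega>. h (X 0 \<omega>)) * nG h" for h
  have a0: "0 \<le> a h" if "h \<in> G" for h
    unfolding a_def Lr_norm_def using Gn[OF that] by simp
  have rec: "ms.AA h n m \<le> c * (real n * a h) + (\<Sum>q\<in>{1..<m}. ms.AA h n q * ms.AA h n (m - q))"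
    if m: "2 \<le> m" "m \<le> 2 * p" and h: "h \<in> H" for m h n
  proof -
    have hG: "h \<in> G" and hb: "\<forall>x. \<bar>h x\<bar> \<le> 1" and hc: "(\<integral>\<omega>. h (X 0 \<omega>) \<partial>M) = 0"
      using h unfolding H_def by simp_all
    have Qm: "Q (m - 1) (Kf (m - 1))" by (rule Kf) (use m in simp)
    have Kp: "\<bar>cov M (\<lambda>\<omega>. \<Prod>j\<in>{0..<q}. h (X (\<Sum>l\<in>{1..j}. i l) \<omega>))
              (\<lambda>\<omega>. \<Prod>j\<in>{q..m - 1}. h (X (\<Sum>l\<in>{1..j}. i l) \<omega>))\<bar> \<le> (Kb * a h) * \<Theta> (i q)"
      if q: "q \<in> {1..m - 1}" for i q
    proof -
      have "\<bar>cov M (\<lambda>\<omega>. \<Prod>j\<in>{0..<q}. h (X (\<Sum>l\<in>{1..j}. i l) \<omega>))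
              (\<lambda>\<omega>. \<Prod>j\<in>{q..m - 1}. h (X (\<Sum>l\<in>{1..j}. i l) \<omega>))\<bar>
          \<le> Kf (m - 1) * Lr_norm M r (\<lambda>\<omega>. h (X 0 \<omega>)) * nG h * \<Theta> (i q)"
        using Qm hG hb hc q unfolding Q_def by blast
      also have "\<dots> = Kf (m - 1) * (a h * \<Theta> (i q))" unfolding a_def by (simp add: mult.assoc)
      also have "\<dots> \<le> Kb * (a h * \<Theta> (i q))"
        by (rule mult_right_mono[OF KbK]) (use m a0[OF hG] nnT in auto)
      finally show ?thesis by (simp add: mult.assoc)
    qed
    have "ms.AA h n m \<le> (Kb * a h) * (real n * (real (m-1) * (\<Sum>r\<in>{0..n}. (real r + 1)^(m-2) * \<Theta> r)))
           + (\<Sum>q\<in>{1..<m}. ms.AA h n q * ms.AA h n (m - q))"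
      by (rule ms.AA_rec[OF Kp Gm[OF hG] m(1)]) (use Kb0 a0[OF hG] nnT in simp_all)
    moreover have "(Kb * a h) * (real n * (real (m-1) * (\<Sum>r\<in>{0..n}. (real r + 1)^(m-2) * \<Theta> r)))
        \<le> c * (real n * a h)"
    proof -
      have Ts: "(\<Sum>r\<in>{0..n}. (real r + 1)^(m-2) * \<Theta> r) \<le> T"
        unfolding T_def by (rule sum_T_bound[OF nnT assms(7)]) (use m in simp)
      have Ts0: "0 \<le> (\<Sum>r\<in>{0..n}. (real r + 1)^(m-2) * \<Theta> r)" by (rule sum_nonneg) (simp add: nnT)
      have "real (m-1) * (\<Sum>r\<in>{0..n}. (real r + 1)^(m-2) * \<Theta> r) \<le> real (2 * p) * T"
        by (rule mult_mono) (use m Ts Ts0 T0 in simp_all)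
      then have "Kb * (real (m-1) * (\<Sum>r\<in>{0..n}. (real r + 1)^(m-2) * \<Theta> r)) \<le> Kb * (real (2 * p) * T)"
        by (rule mult_left_mono) (rule Kb0)
      then have "(Kb * (real (m-1) * (\<Sum>r\<in>{0..n}. (real r + 1)^(m-2) * \<Theta> r))) * (real n * a h)
          \<le> (Kb * (real (2 * p) * T)) * (real n * a h)"
        by (rule mult_right_mono) (use a0[OF hG] in simp)
      then show ?thesis unfolding c_def by (simp add: algebra_simps)
    qed
    ultimately show ?thesis by linarith
  qed
  have A1: "ms.AA h n 1 = 0" if "h \<in> H" for h n
    using that unfolding H_def by (intro ms.AA_1) (simp_all add: Gm)
  have "\<exists>D\<ge>0. \<forall>h\<in>H. \<forall>n. ms.AA h n (2*p) \<le> D * (real n * a h + (real n * a h) ^ ((2*p) div 2))"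
  proof (rule abstract_bound[where A = ms.AA and b = "\<lambda>h n. real n * a h" and P = "2*p" and c = c])
    show "\<And>m h n. 2 \<le> m \<Longrightarrow> m \<le> 2 * p \<Longrightarrow> h \<in> H \<Longrightarrow>
        ms.AA h n m \<le> c * (real n * a h) + (\<Sum>q = 1..<m. ms.AA h n q * ms.AA h n (m - q))"
      by (rule rec)
    show "\<And>h n. h \<in> H \<Longrightarrow> 0 \<le> real n * a h" using a0 unfolding H_def by simp
  qed (use A1 ms.AA_nonneg c0 assms(6) in simp_all)
  then obtain D where D0: "0 \<le> D" and D: "\<And>h n. h \<in> H \<Longrightarrow> ms.AA h n (2*p) \<le> D * (real n * a h + (real n * a h) ^ p)"
    by auto
  define C where "C = 4 ^ p * fact (2 * p) * D + 1"
  have C0: "0 < C" unfolding C_def using D0 by (simp add: add_nonneg_pos)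
  have main: "(\<integral>\<omega>. \<bar>\<Sum>i\<in>{1..n}. f (X i \<omega>) - (\<integral>\<omega>'. f (X 0 \<omega>') \<partial>M)\<bar> ^ (2 * p) \<partial>M)
           \<le> C * (\<Sum>i\<in>{1..p}. real n ^ i
                 * Lr_norm M r (\<lambda>\<omega>. f (X 0 \<omega>) - (\<integral>\<omega>'. f (X 0 \<omega>') \<partial>M)) ^ i
                 * nG (\<lambda>x. f x - (\<integral>\<omega>'. f (X 0 \<omega>') \<partial>M)) ^ i)"
    if fG: "f \<in> G" and fb: "\<forall>x. \<bar>f x\<bar> \<le> 1" and n: "n \<ge> 1" for f n
  proof -
    define c0 where "c0 = (\<integral>\<omega>'. f (X 0 \<omega>') \<partial>M)"
    define g where "g x = (f x - c0) / 2" for x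
    have fm: "f \<in> borel_measurable borel" by (rule Gm[OF fG])
    have c0P: "c0 = ms.PP f [0]" unfolding c0_def ms.PP_def by simp
    have c01: "\<bar>c0\<bar> \<le> 1" unfolding c0P by (rule ms.abs_PP_le) (use fb in simp)
    have gG: "g \<in> G"
    proof -
      have "(\<lambda>x. f x + (\<lambda>_. - c0) x) \<in> G" by (rule Ga[OF fG Gc])
      then have "(\<lambda>x. (1/2) * (f x + (\<lambda>_. - c0) x)) \<in> G" by (rule Gs)
      moreover have "(\<lambda>x. (1/2) * (f x + (\<lambda>_. - c0) x)) = g" unfolding g_def by (rule ext) simp
      ultimately show ?thesis by simp
    qed
    have gb: "\<forall>x. \<bar>g x\<bar> \<le> 1"
    proof
      fix x
      have "\<bar>f x - c0\<bar> \<le> 2" using fb[rule_format, of x] c01 by arith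
      then show "\<bar>g x\<bar> \<le> 1" unfolding g_def by simp
    qed
    have fint: "integrable M (\<lambda>\<omega>. f (X 0 \<omega>))"
      using ms.integrable_prod[OF fm, of "[0]"] fb by simp
    have gc: "(\<integral>\<omega>. g (X 0 \<omega>) \<partial>M) = 0"
    proof -
      have "(\<integral>\<omega>. g (X 0 \<omega>) \<partial>M) = (\<integral>\<omega>. (f (X 0 \<omega>) - c0) \<partial>M) / 2"
        unfolding g_def by simp
      also have "(\<integral>\<omega>. (f (X 0 \<omega>) - c0) \<partial>M) = c0 - c0"
        using fint by (simp add: c0_def prob_space)
      finally show ?thesis by simp
    qed
    have gH: "g \<in> H" unfolding H_def using gG gb gc by simp
    have gm: "g \<in> borel_measurable borel" by (rule Gm[OF gG])
    define L where "L = Lr_norm M r (\<lambda>\<omega>. g (X 0 \<omega>))"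
    define N where "N = nG g"
    define b where "b = real n * a g"
    have b0: "0 \<le> b" unfolding b_def using a0[OF gG] by simp
    have ab: "a g = L * N" unfolding a_def L_def N_def ..
    have fg: "\<And>x. f x - c0 = 2 * g x" unfolding g_def by simp
    have Lf: "Lr_norm M r (\<lambda>\<omega>. f (X 0 \<omega>) - c0) = 2 * L"
    proof -
      have "Lr_norm M r (\<lambda>\<omega>. f (X 0 \<omega>) - c0) = Lr_norm M r (\<lambda>\<omega>. 2 * g (X 0 \<omega>))" by (simp only: fg)
      also have "\<dots> = 2 * L" unfolding L_def by (rule Lr_scale) (use r1 in simp)
      finally show ?thesis .
    qed
    have Nf: "nG (\<lambda>x. f x - c0) = 2 * N"
    proof -
      have "nG (\<lambda>x. f x - c0) = nG (\<lambda>x. 2 * g x)" by (simp only: fg)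
      also have "\<dots> = 2 * N" unfolding N_def using Gh[OF gG, of 2] by simp
      finally show ?thesis .
    qed
    have RHS: "(\<Sum>i\<in>{1..p}. real n ^ i * Lr_norm M r (\<lambda>\<omega>. f (X 0 \<omega>) - c0) ^ i * nG (\<lambda>x. f x - c0) ^ i)
        = (\<Sum>i\<in>{1..p}. (4 * b) ^ i)"
    proof (rule sum.cong[OF refl])
      fix i
      have "real n ^ i * (2 * L) ^ i * (2 * N) ^ i = (real n * (2 * L) * (2 * N)) ^ i"
        by (simp only: power_mult_distrib)
      also have "real n * (2 * L) * (2 * N) = 4 * b" unfolding b_def ab by simp
      finally show "real n ^ i * Lr_norm M r (\<lambda>\<omega>. f (X 0 \<omega>) - c0) ^ i * nG (\<lambda>x. f x - c0) ^ i = (4 * b) ^ i"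
        unfolding Lf Nf .
    qed
    have R0: "b + b ^ p \<le> (\<Sum>i\<in>{1..p}. (4 * b) ^ i)" by (rule sum_pow_ge[OF b0 assms(6)])
    let ?Y = "\<lambda>\<omega> i. g (X i \<omega>)"
    have pw: "\<bar>\<Sum>i\<in>{1..n}. f (X i \<omega>) - c0\<bar> ^ (2 * p)
        = 4 ^ p * (\<Sum>xs\<in>LL (2 * p) {1..n}. prod_list (map (?Y \<omega>) xs))" for \<omega>
    proof -
      have "(\<Sum>i\<in>{1..n}. f (X i \<omega>) - c0) = 2 * (\<Sum>i\<in>{1..n}. ?Y \<omega> i)"
        by (simp add: fg sum_distrib_left)
      then have "\<bar>\<Sum>i\<in>{1..n}. f (X i \<omega>) - c0\<bar> ^ (2 * p) = (2 * (\<Sum>i\<in>{1..n}. ?Y \<omega> i)) ^ (2 * p)"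
        by (simp add: power_even_abs)
      also have "\<dots> = 4 ^ p * (\<Sum>i\<in>{1..n}. ?Y \<omega> i) ^ (2 * p)"
        by (simp add: power_mult_distrib power_mult)
      also have "(\<Sum>i\<in>{1..n}. ?Y \<omega> i) ^ (2 * p) = (\<Sum>xs\<in>LL (2 * p) {1..n}. prod_list (map (?Y \<omega>) xs))"
        by (rule sum_power_lists) simp
      finally show ?thesis .
    qed
    have "(\<integral>\<omega>. \<bar>\<Sum>i\<in>{1..n}. f (X i \<omega>) - c0\<bar> ^ (2 * p) \<partial>M)
        = 4 ^ p * (\<Sum>xs\<in>LL (2 * p) {1..n}. ms.PP g xs)"
    proof -
      have "(\<integral>\<omega>. \<bar>\<Sum>i\<in>{1..n}. f (X i \<omega>) - c0\<bar> ^ (2 * p) \<partial>M)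
          = (\<integral>\<omega>. 4 ^ p * (\<Sum>xs\<in>LL (2 * p) {1..n}. prod_list (map (?Y \<omega>) xs)) \<partial>M)"
        by (simp only: pw)
      also have "\<dots> = 4 ^ p * (\<integral>\<omega>. (\<Sum>xs\<in>LL (2 * p) {1..n}. prod_list (map (?Y \<omega>) xs)) \<partial>M)"
        by (rule integral_mult_right_zero)
      also have "(\<integral>\<omega>. (\<Sum>xs\<in>LL (2 * p) {1..n}. prod_list (map (?Y \<omega>) xs)) \<partial>M)
          = (\<Sum>xs\<in>LL (2 * p) {1..n}. ms.PP g xs)"
              proof -
        have gint: "integrable M (\<lambda>\<omega>. prod_list (map (?Y \<omega>) xs))" for xs
          by (rule ms.integrable_prod[OF gm]) (use gb in simp)
        show ?thesis unfolding ms.PP_def by (simp add: gint)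
      qed
      finally show ?thesis .
    qed
    also have "\<dots> \<le> 4 ^ p * (\<Sum>xs\<in>LL (2 * p) {1..n}. \<bar>ms.PP g (sort xs)\<bar>)"
    proof (rule mult_left_mono)
      have srt: "ms.PP g (sort xs) = ms.PP g xs" for xs
      proof -
        have "prod_list (map (?Y \<omega>) (sort xs)) = prod_list (map (?Y \<omega>) xs)" for \<omega>
          by (simp only: prod_mset_prod_list[symmetric] mset_map mset_sort)
        then show ?thesis unfolding ms.PP_def by simp
      qed
      show "(\<Sum>xs\<in>LL (2 * p) {1..n}. ms.PP g xs) \<le> (\<Sum>xs\<in>LL (2 * p) {1..n}. \<bar>ms.PP g (sort xs)\<bar>)"
        unfolding srt by (rule sum_mono) simp
    qed simp
    also have "\<dots> \<le> 4 ^ p * (fact (2 * p) * ms.AA g n (2 * p))"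
      unfolding ms.AA_def by (rule mult_left_mono[OF sum_sort_le]) simp_all
    also have "\<dots> \<le> 4 ^ p * (fact (2 * p) * (D * (b + b ^ p)))"
      using D[OF gH, of n] unfolding b_def by (intro mult_left_mono) simp_all
    also have "\<dots> \<le> 4 ^ p * (fact (2 * p) * (D * (\<Sum>i\<in>{1..p}. (4 * b) ^ i)))"
      using R0 D0 by (intro mult_left_mono) simp_all
    also have "\<dots> \<le> C * (\<Sum>i\<in>{1..p}. (4 * b) ^ i)"
    proof -
      have S0: "0 \<le> (\<Sum>i\<in>{1..p}. (4 * b) ^ i)" using b0 by (intro sum_nonneg) simp
      have "4 ^ p * (fact (2 * p) * (D * (\<Sum>i\<in>{1..p}. (4 * b) ^ i)))
          = (4 ^ p * fact (2 * p) * D) * (\<Sum>i\<in>{1..p}. (4 * b) ^ i)" by (simp add: mult.assoc)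
      also have "\<dots> \<le> C * (\<Sum>i\<in>{1..p}. (4 * b) ^ i)"
        unfolding C_def by (rule mult_right_mono[OF _ S0]) simp
      finally show ?thesis .
    qed
    finally show ?thesis unfolding RHS[symmetric] c0_def .
  qed
  show ?thesis using C0 main by blast
qed

end
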